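(* Let $S$ be a standard quantum entity on a finite-dimensional complex Hilbert space $\mathcal{H}$. For any two experiments $e_E,e_F$, either $e_E=e_F$ or $e_E\perp e_F$.
   Context: A spectral family of $\mathcal{H}$ is a set $E=\{E_1,\dots,E_r\}$ of pairwise orthogonal nonzero orthogonal projections with $\sum_kE_k=I$. The standard quantum entity on $\mathcal{H}$ has states $p_{\bar c}$, one for each ray $\bar c$ (generated by a unit vector $c$), experiments $e_E$, one for each spectral family $E$ (so $e_E=e_F$ iff $E=F$), outcomes $x_{E_k}$, one for each orthogonal projection $E_k$, and outcome sets $O(e_E,p_{\bar c})=\{x_{E_k}:E_k\in E,\ E_kc\neq0\}$. Experiment orthogonality: $e\perp f$ iff there is a state $p$ with $O(e,p)\cap O(f,p)=\emptyset$. *)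

theory Defs
  imports "HOL-Analysis.Analysis"
begin

text \<open>The finite-dimensional complex Hilbert space is modelled as complex^'n with 'n a
finite type (dimension CARD('n)); operators are complex matrices complex^'n^'n.\<close>

definition adjoint_mat :: "complex^'n^'n \<Rightarrow> complex^'n^'n" where
  "adjoint_mat A = (\<chi> i j. cnj (A $ j $ i))"

definition orth_proj :: "complex^'n^'n \<Rightarrow> bool" where
  "orth_proj P \<longleftrightarrow> P ** P = P \<and> adjoint_mat P = P"

definition spectral_family :: "(complex^'n^'n) set \<Rightarrow> bool" where
  "spectral_family E \<longleftrightarrow> finite E \<and> (\<forall>P\<in>E. orth_proj P \<and> P \<noteq> 0)
     \<and> (\<forall>P\<in>E. \<forall>Q\<in>E. P \<noteq> Q \<longrightarrow> P ** Q = 0) \<and> (\<Sum>P\<in>E. P) = mat 1"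

text \<open>States p_c are given by unit vectors c (the ray generated by c); the outcome set
depends only on the ray. Outcome x_P is identified with the projection P, experiment e_E
with the spectral family E.\<close>

definition outcome_set :: "(complex^'n^'n) set \<Rightarrow> complex^'n \<Rightarrow> (complex^'n^'n) set" where
  "outcome_set E c = {P \<in> E. P *v c \<noteq> 0}"

definition exp_orth :: "(complex^'n^'n) set \<Rightarrow> (complex^'n^'n) set \<Rightarrow> bool" where
  "exp_orth E F \<longleftrightarrow> (\<exists>c::complex^'n. norm c = 1 \<and> outcome_set E c \<inter> outcome_set F c = {})"

end

theory Submission
  imports Defs
begin

lemma nonzero_mat_vec:
  fixes A :: "complex^'n^'n"
  assumes "A \<noteq> 0"
  shows "\<exists>v. A *v v \<noteq> 0"
proof (rule ccontr)
  assume "\<not> ?thesis"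
  hence h: "\<And>v. A *v v = 0" by blast
  have "A $ i $ j = 0" for i j
  proof -
    have "(A *v axis j 1) $ i = 0" using h by simp
    moreover have "(A *v axis j 1) $ i = A $ i $ j"
      by (simp add: matrix_vector_mult_def axis_def if_distrib cong: if_cong)
    ultimately show ?thesis by simp
  qed
  hence "A = 0" by (simp add: vec_eq_iff)
  thus False using assms by simp
qed

lemma key:
  assumes E: "spectral_family E" and P0: "P0 \<in> E" "P0 \<notin> F"
  shows "exp_orth E F"
proof -
  have idem: "P0 ** P0 = P0" and nz: "P0 \<noteq> 0"
    using E P0 unfolding spectral_family_def orth_proj_def by auto
  obtain v where v: "P0 *v v \<noteq> 0" using nonzero_mat_vec[OF nz] by blast
  define c where "c = (1 / norm (P0 *v v)) *\<^sub>R (P0 *v v)"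
  have nc: "norm c = 1" using v unfolding c_def
    by simp
  have PP: "P0 *v (P0 *v v) = P0 *v v"
    by (simp add: matrix_vector_mul_assoc idem)
  have Pc: "P0 *v c = c" unfolding c_def
    using linear_scale[OF matrix_vector_mul_linear[of P0]] PP by simp
  have "outcome_set E c \<inter> outcome_set F c = {}"
  proof (rule ccontr)
    assume "\<not> ?thesis"
    then obtain Q where Q: "Q \<in> E" "Q \<in> F" "Q *v c \<noteq> 0"
      unfolding outcome_set_def by blast
    have "Q \<noteq> P0" using Q P0 by blast
    hence "Q ** P0 = 0" using E Q P0 unfolding spectral_family_def by blast
    hence "Q *v c = 0" using Pc
      by (metis matrix_vector_mul_assoc matrix_vector_mult_0)
    thus False using Q by simp
  qed
  thus ?thesis unfolding exp_orth_def using nc by blast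
qed

theorem mainTheorem19:
  fixes E F :: "(complex^'n^'n) set"
  assumes "spectral_family E" and "spectral_family F"
  shows "E = F \<or> exp_orth E F"
proof (cases "E = F")
  case False
  then obtain P where "P \<in> E \<and> P \<notin> F \<or> P \<in> F \<and> P \<notin> E" by blast
  thus ?thesis
  proof
    assume "P \<in> E \<and> P \<notin> F" thus ?thesis using key assms by blast
  next
    assume "P \<in> F \<and> P \<notin> E"
    hence "exp_orth F E" using key assms by blast
    thus ?thesis unfolding exp_orth_def by (auto simp: Int_commute)
  qed
qed simp

end
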